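(* Let $01234$ be a convex pentagon inscribed in a circle of radius $R$, with vertices in cyclic order and area $A$. Let $$a_0=|23|,\quad a_1=|34|,\quad a_2=|40|,\quad a_3=|01|,\quad a_4=|12|,$$ and let $X=|14|$. Put $p=a_2a_3$, $P=a_0a_1a_4$, $q=a_2^2+a_3^2$, and $Q=a_0^2+a_1^2+a_4^2$. Then $$(X^2-q)\,4AR=p\,[(Q-q)X+2P].$$
   Context: $|ij|$ denotes the distance between vertices $i$ and $j$. *)

theory Defs
  imports "HOL-Analysis.Analysis"
begin

text \<open>Points of the Euclidean plane are modelled as complex numbers.
  The 2D cross product (signed parallelogram area) of two vectors.\<close>
definition cross2 :: "complex \<Rightarrow> complex \<Rightarrow> real" where
  "cross2 u w = Re u * Im w - Im u * Re w"

definition convex_polygon_ccw :: "complex list \<Rightarrow> bool" where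
  "convex_polygon_ccw vs \<longleftrightarrow>
     (let n = length vs in
       \<forall>i<n. \<forall>j<n. j \<noteq> i \<and> j \<noteq> Suc i mod n \<longrightarrow>
          cross2 (vs ! (Suc i mod n) - vs ! i) (vs ! j - vs ! i) > 0)"

definition convex_polygon :: "complex list \<Rightarrow> bool" where
  "convex_polygon vs \<longleftrightarrow> length vs \<ge> 3 \<and>
     (convex_polygon_ccw vs \<or> convex_polygon_ccw (rev vs))"

definition polygon_area :: "complex list \<Rightarrow> real" where
  "polygon_area vs =
     \<bar>\<Sum>i<length vs. cross2 (vs ! i) (vs ! (Suc i mod length vs))\<bar> / 2"

end

theory Submission
  imports Defs
begin

lemma chord_comp:
 fixes x1 y1 x2 y2 x3 y3 R l1 l2 l3 :: real
 assumes c1: "x1^2+y1^2=R^2" and c2: "x2^2+y2^2=R^2" and c3: "x3^2+y3^2=R^2"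
   and R: "R > 0"
   and l1: "l1 \<ge> 0" "l1^2 = (x1-x2)^2+(y1-y2)^2"
   and l2: "l2 \<ge> 0" "l2^2 = (x2-x3)^2+(y2-y3)^2"
   and l3: "l3 \<ge> 0" "l3^2 = (x1-x3)^2+(y1-y3)^2"
   and T: "(x2-x1)*(y3-y1) - (y2-y1)*(x3-x1) > 0"
 shows "l3/(2*R) = (l1/(2*R))*((x2*y3-y2*x3)/(R*l2)) + ((x1*y2-y1*x2)/(R*l1))*(l2/(2*R))"
   and "(x1*y3-y1*x3)/(R*l3) = ((x1*y2-y1*x2)/(R*l1))*((x2*y3-y2*x3)/(R*l2)) - (l1/(2*R))*(l2/(2*R))"
   and "l1 > 0" "l2 > 0" "l3 > 0"
proof -
  define T where "T = (x2-x1)*(y3-y1) - (y2-y1)*(x3-x1)"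
  have Tp: "T > 0" using T by (simp add: T_def)
  have I0: "l1^2*(x2*y3-y2*x3) + (x1*y2-y1*x2)*l2^2 = 2*R^2*T"
    unfolding l1 l2 T_def using c1 c2 c3 by algebra
  have I1: "l1^2*l2^2*l3^2 = 4*R^2*T^2"
    unfolding l1 l2 l3 T_def using c1 c2 c3 by algebra
  have I2: "(4*(x1*y2-y1*x2)*(x2*y3-y2*x3) - l1^2*l2^2)*l3^2 = 8*R^2*(x1*y3-y1*x3)*T"
    unfolding l1 l2 l3 T_def using c1 c2 c3 by algebra
  have "l1 \<noteq> 0"
  proof
    assume "l1 = 0" then have "x1 = x2" "y1 = y2" using l1 by (auto simp: sum_power2_eq_zero_iff)
    then show False using Tp by (simp add: T_def)
  qed
  moreover have "l2 \<noteq> 0"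
  proof
    assume "l2 = 0" then have "x2 = x3" "y2 = y3" using l2 by (auto simp: sum_power2_eq_zero_iff)
    then show False using Tp by (simp add: T_def)
  qed
  moreover have "l3 \<noteq> 0"
  proof
    assume "l3 = 0" then have "x1 = x3" "y1 = y3" using l3 by (auto simp: sum_power2_eq_zero_iff)
    then show False using Tp by (simp add: T_def)
  qed
  ultimately show lp: "l1 > 0" "l2 > 0" "l3 > 0" using l1 l2 l3 by auto
  have "(l1*l2*l3)^2 = (2*R*T)^2" using I1 by (simp add: power_mult_distrib)
  then have P: "l1*l2*l3 = 2*R*T"
    using lp R Tp by (subst (asm) power2_eq_iff_nonneg) auto
  show "l3/(2*R) = (l1/(2*R))*((x2*y3-y2*x3)/(R*l2)) + ((x1*y2-y1*x2)/(R*l1))*(l2/(2*R))"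
  proof -
    have "(l1/(2*R))*((x2*y3-y2*x3)/(R*l2)) + ((x1*y2-y1*x2)/(R*l1))*(l2/(2*R))
        = (l1^2*(x2*y3-y2*x3) + (x1*y2-y1*x2)*l2^2) / (2*R^2*l1*l2)"
      using lp R by (simp add: field_simps power2_eq_square)
    also have "\<dots> = T/(l1*l2)" using I0 lp R by (simp add: power2_eq_square)
    also have "\<dots> = l3/(2*R)" using P lp R by (simp add: field_simps)
    finally show ?thesis by simp
  qed
  show "(x1*y3-y1*x3)/(R*l3) = ((x1*y2-y1*x2)/(R*l1))*((x2*y3-y2*x3)/(R*l2)) - (l1/(2*R))*(l2/(2*R))"
  proof -
    have "(4*(x1*y2-y1*x2)*(x2*y3-y2*x3) - l1^2*l2^2)*l3 = 4*R*(x1*y3-y1*x3)*(l1*l2)"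
    proof -
      have "(4*(x1*y2-y1*x2)*(x2*y3-y2*x3) - l1^2*l2^2)*l3*l3 = 4*R*(x1*y3-y1*x3)*(l1*l2)*l3"
      proof -
        have "(4*(x1*y2-y1*x2)*(x2*y3-y2*x3) - l1^2*l2^2)*l3*l3 = (4*(x1*y2-y1*x2)*(x2*y3-y2*x3) - l1^2*l2^2)*l3^2"
          by (simp add: power2_eq_square)
        also have "\<dots> = 4*R*(x1*y3-y1*x3)*(2*R*T)" using I2 by (simp add: power2_eq_square algebra_simps)
        also have "\<dots> = 4*R*(x1*y3-y1*x3)*(l1*l2*l3)" using P by simp
        finally show ?thesis by (simp add: algebra_simps)
      qed
      then show ?thesis using lp by simp
    qed
    then have E: "4*(x1*y2-y1*x2)*(x2*y3-y2*x3) - l1^2*l2^2 = 4*R*(x1*y3-y1*x3)*(l1*l2)/l3"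
      using lp by (simp add: field_simps)
    have "((x1*y2-y1*x2)/(R*l1))*((x2*y3-y2*x3)/(R*l2)) - (l1/(2*R))*(l2/(2*R))
       = (4*(x1*y2-y1*x2)*(x2*y3-y2*x3) - l1^2*l2^2)/(4*R^2*l1*l2)"
      using lp R by (simp add: field_simps power2_eq_square)
    also have "\<dots> = (4*R*(x1*y3-y1*x3)*(l1*l2)/l3)/(4*R^2*l1*l2)" unfolding E ..
    also have "\<dots> = (x1*y3-y1*x3)/(R*l3)" using lp R by (simp add: field_simps power2_eq_square)
    finally show ?thesis by simp
  qed
qed

lemma unit_chord:
 fixes x1 y1 x2 y2 R l :: real
 assumes c1: "x1^2+y1^2=R^2" and c2: "x2^2+y2^2=R^2" and R: "R > 0"
   and l: "l > 0" "l^2 = (x1-x2)^2+(y1-y2)^2"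
 shows "((x1*y2-y1*x2)/(R*l))^2 + (l/(2*R))^2 = 1"
proof -
  have "4*(x1*y2-y1*x2)^2 + (l^2)^2 = 4*R^2*l^2"
    unfolding l using c1 c2 by algebra
  then show ?thesis using R l by (simp add: field_simps power2_eq_square)
qed

lemma final_alg:
 fixes s0 s1 s2 s3 s4 c0 c1 c2 c3 c4 sZ cZ sW cW :: real
 assumes u: "c0^2+s0^2=1" "c1^2+s1^2=1" "c2^2+s2^2=1" "c3^2+s3^2=1" "c4^2+s4^2=1"
 and Z: "sZ = s2*c3+c2* s3" "cZ = c2*c3 - s2* s3"
 and W: "sW = s4*c0+c4* s0" "cW = c4*c0 - s4* s0"
 and Y: "sZ = sW*c1+cW* s1" "-cZ = cW*c1 - sW* s1"
 shows "(sZ^2 - s2^2 - s3^2)*(s0*c0+s1*c1+s2*c2+s3*c3+s4*c4) = s2* s3*(2*(s0^2+s1^2+s4^2-s2^2-s3^2)* sZ + 4* s0* s1* s4)"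
proof -
  have h1: "sZ^2 - s2^2 - s3^2 = 2* s2* s3*cZ" using u(3,4) Z by algebra
  have h2: "cZ*(s2*c2+s3*c3) + (s2^2+s3^2)* sZ = sZ" using u(3,4) Z by algebra
  have h3: "cZ*(s0*c0+s1*c1+s4*c4) = (s0^2+s1^2+s4^2)* sZ - sZ + 2* s0* s1* s4"
    using u(1,2,5) W Y by algebra
  have "cZ*(s0*c0+s1*c1+s2*c2+s3*c3+s4*c4) = cZ*(s0*c0+s1*c1+s4*c4) + cZ*(s2*c2+s3*c3)"
    by (simp add: algebra_simps)
  also have "\<dots> = (s0^2+s1^2+s4^2-s2^2-s3^2)* sZ + 2* s0* s1* s4"
    using h2 h3 by (simp add: algebra_simps)
  finally have "cZ*(s0*c0+s1*c1+s2*c2+s3*c3+s4*c4) = (s0^2+s1^2+s4^2-s2^2-s3^2)* sZ + 2* s0* s1* s4" .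
  then have "2* s2* s3*(cZ*(s0*c0+s1*c1+s2*c2+s3*c3+s4*c4)) = 2* s2* s3*((s0^2+s1^2+s4^2-s2^2-s3^2)* sZ + 2* s0* s1* s4)"
    by simp
  then show ?thesis unfolding h1 by (simp add: algebra_simps)
qed
lemma sum5_gen: "(\<Sum>i<(5::nat). f i) = f 0 + f 1 + f 2 + f 3 + (f 4::real)"
  by (simp add: eval_nat_numeral add.assoc)
lemma sum5: "(\<Sum>i<length [w0, w1, w2, w3, w4]. cross2 ([w0, w1, w2, w3, w4] ! i)
        ([w0, w1, w2, w3, w4] ! (Suc i mod length [w0, w1, w2, w3, w4])))
      = cross2 w0 w1 + cross2 w1 w2 + cross2 w2 w3 + cross2 w3 w4 + cross2 w4 w0"
proof -
  have l: "length [w0, w1, w2, w3, w4] = 5" by simp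
  show ?thesis unfolding l sum5_gen by simp
qed

lemma len_sq: "(dist u w)^2 = (Re u - Re w)^2 + (Im u - Im w)^2"
  by (simp add: dist_norm cmod_power2)

lemma core:
  fixes w0 w1 w2 w3 w4 c :: complex and R A a0 a1 a2 a3 a4 X :: real
  assumes R: "R > 0"
    and circ: "dist w0 c = R" "dist w1 c = R" "dist w2 c = R" "dist w3 c = R" "dist w4 c = R"
    and E1: "cross2 (w0 - w4) (w1 - w4) > 0"
    and E2: "cross2 (w2 - w1) (w3 - w1) > 0"
    and E3: "cross2 (w4 - w3) (w1 - w3) > 0"
    and E4: "cross2 (w1 - w0) (w2 - w0) > 0"
    and E5: "cross2 (w3 - w2) (w0 - w2) > 0"
    and E6: "cross2 (w4 - w3) (w0 - w3) > 0"
    and area: "A = polygon_area [w0, w1, w2, w3, w4]"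
    and sides: "a0 = dist w2 w3" "a1 = dist w3 w4" "a2 = dist w4 w0"
      "a3 = dist w0 w1" "a4 = dist w1 w2"
    and diag: "X = dist w1 w4"
  shows "(X^2 - (a2^2+a3^2)) * (4*A*R) = (a2*a3) * (((a0^2+a1^2+a4^2) - (a2^2+a3^2))*X + 2*(a0*a1*a4))"
proof -
  define x0 where "x0 = Re w0 - Re c"
  define x1 where "x1 = Re w1 - Re c"
  define x2 where "x2 = Re w2 - Re c"
  define x3 where "x3 = Re w3 - Re c"
  define x4 where "x4 = Re w4 - Re c"
  define y0 where "y0 = Im w0 - Im c"
  define y1 where "y1 = Im w1 - Im c"
  define y2 where "y2 = Im w2 - Im c"
  define y3 where "y3 = Im w3 - Im c"
  define y4 where "y4 = Im w4 - Im c"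
  note xy = x0_def x1_def x2_def x3_def x4_def y0_def y1_def y2_def y3_def y4_def
  define e where "e = dist w1 w3"
  have c0: "x0^2+y0^2 = R^2" using len_sq[of w0 c] circ by (simp add: xy)
  have c1: "x1^2+y1^2 = R^2" using len_sq[of w1 c] circ by (simp add: xy)
  have c2: "x2^2+y2^2 = R^2" using len_sq[of w2 c] circ by (simp add: xy)
  have c3: "x3^2+y3^2 = R^2" using len_sq[of w3 c] circ by (simp add: xy)
  have c4: "x4^2+y4^2 = R^2" using len_sq[of w4 c] circ by (simp add: xy)
  have l0: "a0 \<ge> 0" "a0^2 = (x2-x3)^2+(y2-y3)^2" using len_sq[of w2 w3] sides by (simp_all add: xy)
  have l1: "a1 \<ge> 0" "a1^2 = (x3-x4)^2+(y3-y4)^2" using len_sq[of w3 w4] sides by (simp_all add: xy)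
  have l2: "a2 \<ge> 0" "a2^2 = (x4-x0)^2+(y4-y0)^2" using len_sq[of w4 w0] sides by (simp_all add: xy)
  have l3: "a3 \<ge> 0" "a3^2 = (x0-x1)^2+(y0-y1)^2" using len_sq[of w0 w1] sides by (simp_all add: xy)
  have l4: "a4 \<ge> 0" "a4^2 = (x1-x2)^2+(y1-y2)^2" using len_sq[of w1 w2] sides by (simp_all add: xy)
  have lX: "X \<ge> 0" "X^2 = (x4-x1)^2+(y4-y1)^2" using len_sq[of w4 w1] diag by (simp_all add: xy dist_commute)
  have lX': "X^2 = (x1-x4)^2+(y1-y4)^2" using len_sq[of w1 w4] diag by (simp_all add: xy)
  have le: "e \<ge> 0" "e^2 = (x1-x3)^2+(y1-y3)^2" using len_sq[of w1 w3] e_def by (simp_all add: xy)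
  have T1: "(x0-x4)*(y1-y4) - (y0-y4)*(x1-x4) > 0" using E1 by (simp add: cross2_def xy)
  have T2: "(x2-x1)*(y3-y1) - (y2-y1)*(x3-x1) > 0" using E2 by (simp add: cross2_def xy)
  have T3: "(x3-x1)*(y4-y1) - (y3-y1)*(x4-x1) > 0"
  proof -
    have "(x3-x1)*(y4-y1) - (y3-y1)*(x4-x1) = cross2 (w4 - w3) (w1 - w3)"
      by (simp add: cross2_def xy algebra_simps)
    then show ?thesis using E3 by simp
  qed
  note C1 = chord_comp[OF c4 c0 c1 R l2 l3 lX T1]
  note C2 = chord_comp[OF c1 c2 c3 R l4 l0 le T2]
  note C3 = chord_comp[OF c1 c3 c4 R le l1 lX(1) lX' T3]
  have pos: "a0 > 0" "a1 > 0" "a2 > 0" "a3 > 0" "a4 > 0" "X > 0" "e > 0"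
    using C1 C2 C3 by auto
  define s0 where "s0 = a0/(2*R)"
  define s1 where "s1 = a1/(2*R)"
  define s2 where "s2 = a2/(2*R)"
  define s3 where "s3 = a3/(2*R)"
  define s4 where "s4 = a4/(2*R)"
  define sZ where "sZ = X/(2*R)"
  define sW where "sW = e/(2*R)"
  define k0 where "k0 = x2*y3-y2*x3"
  define k1 where "k1 = x3*y4-y3*x4"
  define k2 where "k2 = x4*y0-y4*x0"
  define k3 where "k3 = x0*y1-y0*x1"
  define k4 where "k4 = x1*y2-y1*x2"
  define c0 where "c0 = k0/(R*a0)"
  define c1 where "c1 = k1/(R*a1)"
  define c2 where "c2 = k2/(R*a2)"
  define c3 where "c3 = k3/(R*a3)"
  define c4 where "c4 = k4/(R*a4)"
  define cZ where "cZ = (x4*y1-y4*x1)/(R*X)"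
  define cW where "cW = (x1*y3-y1*x3)/(R*e)"
  have u0: "c0^2+s0^2=1" unfolding c0_def s0_def k0_def by (rule unit_chord[OF c2 c3 R pos(1) l0(2)])
  have u1: "c1^2+s1^2=1" unfolding c1_def s1_def k1_def by (rule unit_chord[OF c3 c4 R pos(2) l1(2)])
  have u2: "c2^2+s2^2=1" unfolding c2_def s2_def k2_def by (rule unit_chord[OF c4 c0 R pos(3) l2(2)])
  have u3: "c3^2+s3^2=1" unfolding c3_def s3_def k3_def by (rule unit_chord[OF c0 c1 R pos(4) l3(2)])
  have u4: "c4^2+s4^2=1" unfolding c4_def s4_def k4_def by (rule unit_chord[OF c1 c2 R pos(5) l4(2)])
  have Z: "sZ = s2 * c3 + c2 * s3" "cZ = c2 * c3 - s2 * s3"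
    unfolding sZ_def s2_def s3_def c2_def c3_def k2_def k3_def cZ_def by (fact C1(1), fact C1(2))
  have W: "sW = s4 * c0 + c4 * s0" "cW = c4 * c0 - s4 * s0"
    unfolding sW_def s4_def s0_def c4_def c0_def k4_def k0_def cW_def by (fact C2(1), fact C2(2))
  have Y1: "sZ = sW * c1 + cW * s1"
    unfolding sZ_def sW_def s1_def c1_def k1_def cW_def by (fact C3(1))
  have Y2: "-cZ = cW * c1 - sW * s1"
  proof -
    have m: "x1*y4-y1*x4 = -(x4*y1-y4*x1)" by (simp add: algebra_simps)
    have "-cZ = (x1*y4-y1*x4)/(R*X)" unfolding cZ_def m by (simp only: minus_divide_left)
    then show ?thesis unfolding sW_def s1_def c1_def k1_def cW_def using C3(2) by simp
  qed
  note F = final_alg[OF u0 u1 u2 u3 u4 Z W Y1 Y2]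
  have sumeq: "(\<Sum>i<length [w0, w1, w2, w3, w4]. cross2 ([w0, w1, w2, w3, w4] ! i)
        ([w0, w1, w2, w3, w4] ! (Suc i mod length [w0, w1, w2, w3, w4])))
      = k0 + k1 + k2 + k3 + k4"
    unfolding sum5 cross2_def xy k0_def k1_def k2_def k3_def k4_def by (simp add: algebra_simps)
  have fan: "k0 + k1 + k2 + k3 + k4 = cross2 (w1 - w0) (w2 - w0) + cross2 (w3 - w2) (w0 - w2) + cross2 (w4 - w3) (w0 - w3)"
    unfolding cross2_def xy k0_def k1_def k2_def k3_def k4_def by (simp add: algebra_simps)
  have Apos: "k0 + k1 + k2 + k3 + k4 > 0" unfolding fan using E4 E5 E6 by simp
  have A2: "A = (k0 + k1 + k2 + k3 + k4)/2"
    using area Apos unfolding polygon_area_def sumeq by simp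
  have kk: "k0 = 2*R^2*(s0*c0)" "k1 = 2*R^2*(s1*c1)" "k2 = 2*R^2*(s2*c2)" "k3 = 2*R^2*(s3*c3)" "k4 = 2*R^2*(s4*c4)"
    using pos R unfolding s0_def s1_def s2_def s3_def s4_def c0_def c1_def c2_def c3_def c4_def
    by (simp_all add: field_simps power2_eq_square)
  have AA: "A = R^2*(s0*c0+s1*c1+s2*c2+s3*c3+s4*c4)" unfolding A2 kk by (simp add: algebra_simps)
  have aa: "a0 = 2*R* s0" "a1 = 2*R* s1" "a2 = 2*R* s2" "a3 = 2*R* s3" "a4 = 2*R* s4" "X = 2*R* sZ"
    using R by (simp_all add: s0_def s1_def s2_def s3_def s4_def sZ_def)
  have "(X^2 - (a2^2+a3^2)) * (4*A*R) - (a2*a3) * (((a0^2+a1^2+a4^2) - (a2^2+a3^2))*X + 2*(a0*a1*a4))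
     = 16*R*R*R*R*R*((sZ^2 - s2^2 - s3^2)*(s0*c0+s1*c1+s2*c2+s3*c3+s4*c4) - s2* s3*(2*(s0^2+s1^2+s4^2-s2^2-s3^2)* sZ + 4* s0* s1* s4))"
    unfolding AA aa by (simp add: power2_eq_square algebra_simps)
  also have "\<dots> = 0" using F by simp
  finally show ?thesis by simp
qed

lemma ccw5:
  assumes "convex_polygon_ccw [a, b, c, d, e]" "i < 5" "j < 5" "j \<noteq> i" "j \<noteq> Suc i mod 5"
  shows "cross2 ([a, b, c, d, e] ! (Suc i mod 5) - [a, b, c, d, e] ! i) ([a, b, c, d, e] ! j - [a, b, c, d, e] ! i) > 0"
  using assms unfolding convex_polygon_ccw_def Let_def by simp

theorem corollary5:
  fixes v0 v1 v2 v3 v4 c :: complex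
    and R A a0 a1 a2 a3 a4 X p P q Q :: real
  assumes convex: "convex_polygon [v0, v1, v2, v3, v4]"
    and inscribed: "R > 0" "dist v0 c = R" "dist v1 c = R" "dist v2 c = R"
      "dist v3 c = R" "dist v4 c = R"
    and area: "A = polygon_area [v0, v1, v2, v3, v4]"
    and sides: "a0 = dist v2 v3" "a1 = dist v3 v4" "a2 = dist v4 v0"
      "a3 = dist v0 v1" "a4 = dist v1 v2"
    and diag: "X = dist v1 v4"
    and defs: "p = a2 * a3" "P = a0 * a1 * a4" "q = a2\<^sup>2 + a3\<^sup>2"
      "Q = a0\<^sup>2 + a1\<^sup>2 + a4\<^sup>2"
  shows "(X\<^sup>2 - q) * (4 * A * R) = p * ((Q - q) * X + 2 * P)"
proof -
  have cases: "convex_polygon_ccw [v0, v1, v2, v3, v4] \<or> convex_polygon_ccw [v4, v3, v2, v1, v0]"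
    using convex unfolding convex_polygon_def by simp
  then show ?thesis
  proof
    assume h: "convex_polygon_ccw [v0, v1, v2, v3, v4]"
    have E1: "cross2 (v0 - v4) (v1 - v4) > 0" using ccw5[OF h, where i=4 and j=1] by simp
    have E2: "cross2 (v2 - v1) (v3 - v1) > 0" using ccw5[OF h, where i=1 and j=3] by simp
    have E3: "cross2 (v4 - v3) (v1 - v3) > 0" using ccw5[OF h, where i=3 and j=1] by simp
    have E4: "cross2 (v1 - v0) (v2 - v0) > 0" using ccw5[OF h, where i=0 and j=2] by simp
    have E5: "cross2 (v3 - v2) (v0 - v2) > 0" using ccw5[OF h, where i=2 and j=0] by simp
    have E6: "cross2 (v4 - v3) (v0 - v3) > 0" using ccw5[OF h, where i=3 and j=0] by simp
    have K: "(X^2 - (a2^2+a3^2)) * (4*A*R) = (a2*a3) * (((a0^2+a1^2+a4^2) - (a2^2+a3^2))*X + 2*(a0*a1*a4))"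
      by (rule core[OF inscribed E1 E2 E3 E4 E5 E6 area sides diag])
    show ?thesis using K unfolding defs by (simp add: mult.assoc)
  next
    assume h: "convex_polygon_ccw [v4, v3, v2, v1, v0]"
    have E1: "cross2 (v0 - v1) (v4 - v1) > 0" using ccw5[OF h, where i=3 and j=0] by simp
    have E2: "cross2 (v3 - v4) (v2 - v4) > 0" using ccw5[OF h, where i=0 and j=2] by simp
    have E3: "cross2 (v1 - v2) (v4 - v2) > 0" using ccw5[OF h, where i=2 and j=0] by simp
    have E4: "cross2 (v4 - v0) (v3 - v0) > 0" using ccw5[OF h, where i=4 and j=1] by simp
    have E5: "cross2 (v2 - v3) (v0 - v3) > 0" using ccw5[OF h, where i=1 and j=4] by simp
    have E6: "cross2 (v1 - v2) (v0 - v2) > 0" using ccw5[OF h, where i=2 and j=4] by simp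
    have area': "A = polygon_area [v0, v4, v3, v2, v1]"
    proof -
      have "(cross2 v0 v4 + cross2 v4 v3 + cross2 v3 v2 + cross2 v2 v1 + cross2 v1 v0)
          = - (cross2 v0 v1 + cross2 v1 v2 + cross2 v2 v3 + cross2 v3 v4 + cross2 v4 v0)"
        unfolding cross2_def by (simp add: algebra_simps)
      then show ?thesis unfolding area polygon_area_def sum5 by (simp only: abs_minus_cancel)
    qed
    have sides': "a0 = dist v3 v2" "a4 = dist v2 v1" "a3 = dist v1 v0" "a2 = dist v0 v4" "a1 = dist v4 v3"
      using sides by (simp_all add: dist_commute)
    have diag': "X = dist v4 v1" using diag by (simp add: dist_commute)
    have K: "(X^2 - (a3^2+a2^2)) * (4*A*R) = (a3*a2) * (((a0^2+a4^2+a1^2) - (a3^2+a2^2))*X + 2*(a0*a4*a1))"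
      by (rule core[OF inscribed(1,2,6,5,4,3) E1 E2 E3 E4 E5 E6 area' sides' diag'])
    have e1: "X\<^sup>2 - q = X^2 - (a3^2+a2^2)" unfolding defs by simp
    have e2: "p * ((Q - q) * X + 2 * P) = (a3*a2) * (((a0^2+a4^2+a1^2) - (a3^2+a2^2))*X + 2*(a0*a4*a1))"
      unfolding defs by (simp add: algebra_simps)
    show ?thesis unfolding e1 e2 using K by (simp add: mult.assoc)
  qed
qed

end
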